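(* Let $\mathcal{A}^0\subset\mathbb{R}^6\setminus\{0\}$ be the set of all $(a,b,c,d,e,f)\neq 0$ such that the Type $\mathcal{A}$ model $\mathcal{M}(a,b,c,d,e,f)$ is flat. Then $\mathcal{A}^0$ is a smooth submanifold of $\mathbb{R}^6\setminus\{0\}$ which is diffeomorphic to the total space of the vector bundle $\mathbb{L}\oplus\mathbb{1}\oplus\mathbb{1}$ over $S^1$ with its zero section removed, where $\mathbb{1}$ denotes the trivial real line bundle over $S^1$ and $\mathbb{L}$ the Möbius line bundle over $S^1$.
   Context: An affine surface is a smooth surface with a torsion free connection $\nabla$; in coordinates $\nabla_{\partial_{x^i}}\partial_{x^j}=\Gamma_{ij}{}^k\partial_{x^k}$. For $(a,b,c,d,e,f)\in\mathbb{R}^6$, the Type $\mathcal{A}$ model $\mathcal{M}(a,b,c,d,e,f)$ is $(\mathbb{R}^2,\nabla)$ with constant Christoffel symbols $\Gamma_{11}{}^1=a$, $\Gamma_{11}{}^2=b$, $\Gamma_{12}{}^1=\Gamma_{21}{}^1=c$, $\Gamma_{12}{}^2=\Gamma_{21}{}^2=d$, $\Gamma_{22}{}^1=e$, $\Gamma_{22}{}^2=f$; this identifies Type $\mathcal{A}$ geometries with $\mathbb{R}^6$. Its Ricci tensor is $\rho=\begin{pmatrix}(a-d)d+b(f-c) & cd-be\\ cd-be & c(f-c)+(a-d)e\end{pmatrix}$, and the model is flat iff $\rho=0$. *)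

theory Defs
  imports "HOL-Analysis.Analysis"
begin

definition ricci11 :: "real \<Rightarrow> real \<Rightarrow> real \<Rightarrow> real \<Rightarrow> real \<Rightarrow> real \<Rightarrow> real" where
  "ricci11 a b c d e f = (a - d) * d + b * (f - c)"
definition ricci12 :: "real \<Rightarrow> real \<Rightarrow> real \<Rightarrow> real \<Rightarrow> real \<Rightarrow> real \<Rightarrow> real" where
  "ricci12 a b c d e f = c * d - b * e"
definition ricci22 :: "real \<Rightarrow> real \<Rightarrow> real \<Rightarrow> real \<Rightarrow> real \<Rightarrow> real \<Rightarrow> real" where
  "ricci22 a b c d e f = c * (f - c) + (a - d) * e"

text \<open>The model is flat iff its Ricci tensor vanishes (the tensor is symmetric,
  so the (2,1) entry equals the (1,2) entry).\<close>
definition typeA_flat :: "real \<Rightarrow> real \<Rightarrow> real \<Rightarrow> real \<Rightarrow> real \<Rightarrow> real \<Rightarrow> bool" where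
  "typeA_flat a b c d e f \<longleftrightarrow>
     ricci11 a b c d e f = 0 \<and> ricci12 a b c d e f = 0 \<and> ricci22 a b c d e f = 0"

definition A0 :: "(real \<times> real \<times> real \<times> real \<times> real \<times> real) set" where
  "A0 = {(a, b, c, d, e, f). (a, b, c, d, e, f) \<noteq> 0 \<and> typeA_flat a b c d e f}"

fun Ck_on :: "nat \<Rightarrow> 'a::euclidean_space set \<Rightarrow> ('a \<Rightarrow> 'b::euclidean_space) \<Rightarrow> bool" where
  "Ck_on 0 U g = continuous_on U g"
| "Ck_on (Suc k) U g =
     ((\<forall>x\<in>U. g differentiable (at x)) \<and>
      (\<forall>i\<in>Basis. Ck_on k U (\<lambda>x. frechet_derivative g (at x) i)))"

definition smooth_on :: "'a::euclidean_space set \<Rightarrow> ('a \<Rightarrow> 'b::euclidean_space) \<Rightarrow> bool" where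
  "smooth_on U g \<longleftrightarrow> open U \<and> (\<forall>k. Ck_on k U g)"

definition smooth_map_on :: "'a::euclidean_space set \<Rightarrow> ('a \<Rightarrow> 'b::euclidean_space) \<Rightarrow> bool" where
  "smooth_map_on S f \<longleftrightarrow>
     (\<forall>p\<in>S. \<exists>U g. open U \<and> p \<in> U \<and> smooth_on U g \<and> (\<forall>x\<in>S \<inter> U. g x = f x))"

definition diffeomorphic_sets :: "'a::euclidean_space set \<Rightarrow> 'b::euclidean_space set \<Rightarrow> bool" where
  "diffeomorphic_sets S T \<longleftrightarrow>
     (\<exists>f g. f ` S \<subseteq> T \<and> g ` T \<subseteq> S \<and> (\<forall>x\<in>S. g (f x) = x) \<and> (\<forall>y\<in>T. f (g y) = y) \<and>
            smooth_map_on S f \<and> smooth_map_on T g)"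

definition smooth_submanifold :: "'a::euclidean_space set \<Rightarrow> bool" where
  "smooth_submanifold M \<longleftrightarrow>
     (\<forall>p\<in>M. \<exists>U V (\<phi>::'a \<Rightarrow> 'a) L.
        open U \<and> p \<in> U \<and> open V \<and> \<phi> ` U = V \<and> inj_on \<phi> U \<and>
        smooth_on U \<phi> \<and> smooth_on V (inv_into U \<phi>) \<and>
        subspace L \<and> \<phi> ` (U \<inter> M) = V \<inter> L)"

text \<open>S^1 is the unit circle in R^2. The Moebius line bundle over S^1 is realised as
  the tautological bundle: the fibre over u = (p,q) is the +1 eigenline of the
  reflection matrix [[p, q], [q, -p]], i.e. the line at half the angle of u.\<close>
definition refl_u :: "real \<times> real \<Rightarrow> real \<times> real \<Rightarrow> real \<times> real" where
  "refl_u u w = (fst u * fst w + snd u * snd w, snd u * fst w - fst u * snd w)"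

definition mobius_bundle :: "((real \<times> real) \<times> (real \<times> real)) set" where
  "mobius_bundle = {(u, w). norm u = 1 \<and> refl_u u w = w}"

text \<open>Total space of L + 1 + 1 over S^1 (Whitney sum: fibre = L_u \<times> R \<times> R),
  with the zero section removed.\<close>
definition L11_minus_zero :: "((real \<times> real) \<times> (real \<times> real) \<times> real \<times> real) set" where
  "L11_minus_zero = {(u, w, s, t). (u, w) \<in> mobius_bundle \<and> (w, s, t) \<noteq> 0}"

end

theory Submission
  imports Defs
begin

abbreviation pd where "pd g x i \<equiv> frechet_derivative g (at x) i"

lemma frechet_derivative_worksI: "f differentiable net \<Longrightarrow> (f has_derivative frechet_derivative f net) net"
  using frechet_derivative_works by blast

lemma Ck_mono: "Ck_on (Suc k) U f \<Longrightarrow> Ck_on k U f"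
proof (induction k arbitrary: f)
  case 0
  then show ?case
    by (auto intro!: continuous_at_imp_continuous_on differentiable_imp_continuous_within)
next
  case (Suc k)
  then show ?case by (metis Ck_on.simps(2))
qed

lemma Ck_cong:
  assumes "open U" "\<And>x. x \<in> U \<Longrightarrow> f x = g x" "Ck_on k U f"
  shows "Ck_on k U g"
  using assms
proof (induction k arbitrary: f g)
  case 0
  then show ?case using continuous_on_cong by auto
next
  case (Suc k)
  have *: "g differentiable (at x) \<and> frechet_derivative g (at x) = frechet_derivative f (at x)"
    if xU: "x \<in> U" for x
  proof -
    obtain D where D: "(f has_derivative D) (at x)" using Suc.prems(3) xU by (auto simp: differentiable_def)
    have "(g has_derivative D) (at x)"
      using has_derivative_transform_within_open[OF D Suc.prems(1) xU] Suc.prems(2) by auto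
    then show ?thesis using D frechet_derivative_at by (metis differentiableI)
  qed
  have "Ck_on k U (\<lambda>x. pd g x i)" if i: "i \<in> Basis" for i
  proof -
    have "Ck_on k U (\<lambda>x. pd f x i)" using Suc.prems(3) i by simp
    then show ?thesis using Suc.IH[OF Suc.prems(1), of "\<lambda>x. pd f x i" "\<lambda>x. pd g x i"] * by simp
  qed
  then show ?case using * by simp
qed

lemma Ck_SucI:
  assumes "open U" "\<And>x. x \<in> U \<Longrightarrow> g differentiable (at x)"
    "\<And>i. i \<in> Basis \<Longrightarrow> Ck_on k U (h i)"
    "\<And>x i. x \<in> U \<Longrightarrow> pd g x i = h i x"
  shows "Ck_on (Suc k) U g"
proof -
  have "Ck_on k U (\<lambda>x. pd g x i)" if i: "i \<in> Basis" for i
    using Ck_cong[OF assms(1) _ assms(3)[OF i], of "\<lambda>x. pd g x i"] assms(4) by metis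
  then show ?thesis using assms(2) by simp
qed

lemma Ck_const: "Ck_on k U (\<lambda>x. c)"
proof (induction k arbitrary: c)
  case 0 then show ?case by simp
next
  case (Suc k)
  have "frechet_derivative (\<lambda>x. c) (at x) = (\<lambda>h. 0)" for x
    by (metis frechet_derivative_at has_derivative_const)
  then show ?case using Suc by simp
qed

lemma Ck_linear: "bounded_linear L \<Longrightarrow> Ck_on k U L"
proof (induction k)
  case 0 then show ?case by (simp add: linear_continuous_on)
next
  case (Suc k)
  have "frechet_derivative L (at x) = L" for x
    by (metis Suc.prems bounded_linear_imp_has_derivative frechet_derivative_at)
  then show ?case using Suc Ck_const
    by (auto intro: differentiableI bounded_linear_imp_has_derivative)
qed

lemma Ck_lincomp:
  assumes "bounded_linear L" "open U" "Ck_on k U f"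
  shows "Ck_on k U (\<lambda>x. L (f x))"
  using assms(3)
proof (induction k arbitrary: f)
  case 0 then show ?case
    using continuous_on_compose[of U f L, unfolded o_def] linear_continuous_on[OF assms(1)] by auto
next
  case (Suc k)
  have *: "(\<lambda>x. L (f x)) differentiable (at x) \<and>
      frechet_derivative (\<lambda>x. L (f x)) (at x) i = L (frechet_derivative f (at x) i)" if "x \<in> U" for x i
  proof -
    have D: "(f has_derivative frechet_derivative f (at x)) (at x)"
      using Suc.prems that by (auto intro: frechet_derivative_worksI)
    have "((\<lambda>x. L (f x)) has_derivative (\<lambda>h. L (frechet_derivative f (at x) h))) (at x)"
      using bounded_linear.has_derivative[OF assms(1) D] .
    note H = this
    show ?thesis using differentiableI[OF H] frechet_derivative_at[OF H, symmetric] by simp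
  qed
  have d: "\<And>x. x \<in> U \<Longrightarrow> (\<lambda>x. L (f x)) differentiable (at x)" by (rule conjunct1[OF *])
  have c: "Ck_on k U (\<lambda>x. L (pd f x i))" if i: "i \<in> Basis" for i
      by (rule Suc.IH) (use Suc.prems that in simp)+
  show ?case
    apply (rule Ck_SucI[where h = "\<lambda>i x. L (pd f x i)"])
       apply (rule assms(2))
      apply (erule d)
     apply (erule c)
    by (rule conjunct2[OF *])
qed

lemma Ck_add:
  fixes f g :: "'a::euclidean_space \<Rightarrow> 'b::euclidean_space"
  assumes "open U" "Ck_on k U f" "Ck_on k U g"
  shows "Ck_on k U (\<lambda>x. f x + g x)"
  using assms(2,3)
proof (induction k arbitrary: f g)
  case 0 then show ?case by (simp add: continuous_on_add)
next
  case (Suc k)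
  have *: "(\<lambda>x. f x + g x) differentiable (at x) \<and>
      frechet_derivative (\<lambda>x. f x + g x) (at x) i = frechet_derivative f (at x) i + frechet_derivative g (at x) i" if "x \<in> U" for x i
  proof -
    have D: "(f has_derivative frechet_derivative f (at x)) (at x)" "(g has_derivative frechet_derivative g (at x)) (at x)"
      using Suc.prems that by (auto intro: frechet_derivative_worksI)
    have "((\<lambda>x. f x + g x) has_derivative (\<lambda>h. frechet_derivative f (at x) h + frechet_derivative g (at x) h)) (at x)"
      using has_derivative_add[OF D] .
    note H = this
    show ?thesis using differentiableI[OF H] frechet_derivative_at[OF H, symmetric] by simp
  qed
  have d: "\<And>x. x \<in> U \<Longrightarrow> (\<lambda>x. f x + g x) differentiable (at x)" by (rule conjunct1[OF *])
  have c: "Ck_on k U (\<lambda>x. pd f x i + pd g x i)" if i: "i \<in> Basis" for i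
      by (rule Suc.IH) (use Suc.prems that in simp)+
  show ?case
    apply (rule Ck_SucI[where h = "\<lambda>i x. pd f x i + pd g x i"])
       apply (rule assms(1))
      apply (erule d)
     apply (erule c)
    by (rule conjunct2[OF *])
qed

lemma Ck_pair:
  fixes f :: "'a::euclidean_space \<Rightarrow> 'b::euclidean_space" and g :: "'a \<Rightarrow> 'c::euclidean_space"
  assumes "open U" "Ck_on k U f" "Ck_on k U g"
  shows "Ck_on k U (\<lambda>x. (f x, g x))"
  using assms(2,3)
proof (induction k arbitrary: f g)
  case 0 then show ?case by (simp add: continuous_on_Pair)
next
  case (Suc k)
  have *: "(\<lambda>x. (f x, g x)) differentiable (at x) \<and>
      frechet_derivative (\<lambda>x. (f x, g x)) (at x) i = (frechet_derivative f (at x) i, frechet_derivative g (at x) i)" if "x \<in> U" for x i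
  proof -
    have D: "(f has_derivative frechet_derivative f (at x)) (at x)" "(g has_derivative frechet_derivative g (at x)) (at x)"
      using Suc.prems that by (auto intro: frechet_derivative_worksI)
    have "((\<lambda>x. (f x, g x)) has_derivative (\<lambda>h. (frechet_derivative f (at x) h, frechet_derivative g (at x) h))) (at x)"
      using has_derivative_Pair[OF D] .
    note H = this
    show ?thesis using differentiableI[OF H] frechet_derivative_at[OF H, symmetric] by simp
  qed
  have d: "\<And>x. x \<in> U \<Longrightarrow> (\<lambda>x. (f x, g x)) differentiable (at x)" by (rule conjunct1[OF *])
  have c: "Ck_on k U (\<lambda>x. (pd f x i, pd g x i))" if i: "i \<in> Basis" for i
      by (rule Suc.IH) (use Suc.prems that in simp)+
  show ?case
    apply (rule Ck_SucI[where h = "\<lambda>i x. (pd f x i, pd g x i)"])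
       apply (rule assms(1))
      apply (erule d)
     apply (erule c)
    by (rule conjunct2[OF *])
qed

lemma Ck_mult:
  fixes f g :: "'a::euclidean_space \<Rightarrow> real"
  assumes "open U" "Ck_on k U f" "Ck_on k U g"
  shows "Ck_on k U (\<lambda>x. f x * g x)"
  using assms(2,3)
proof (induction k arbitrary: f g)
  case 0 then show ?case by (simp add: continuous_on_mult)
next
  case (Suc k)
  have *: "(\<lambda>x. f x * g x) differentiable (at x) \<and>
      frechet_derivative (\<lambda>x. f x * g x) (at x) i = f x * frechet_derivative g (at x) i + frechet_derivative f (at x) i * g x" if "x \<in> U" for x i
  proof -
    have D: "(f has_derivative frechet_derivative f (at x)) (at x)" "(g has_derivative frechet_derivative g (at x)) (at x)"
      using Suc.prems that by (auto intro: frechet_derivative_worksI)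
    have "((\<lambda>x. f x * g x) has_derivative (\<lambda>h. f x * frechet_derivative g (at x) h + frechet_derivative f (at x) h * g x)) (at x)"
      using has_derivative_mult[OF D] .
    note H = this
    show ?thesis using differentiableI[OF H] frechet_derivative_at[OF H, symmetric] by simp
  qed
  have d: "\<And>x. x \<in> U \<Longrightarrow> (\<lambda>x. f x * g x) differentiable (at x)" by (rule conjunct1[OF *])
  have c: "Ck_on k U (\<lambda>x. f x * pd g x i + pd f x i * g x)" if i: "i \<in> Basis" for i
    proof -
      have a: "Ck_on k U f" "Ck_on k U g" using Suc.prems Ck_mono by blast+
      have b: "Ck_on k U (\<lambda>x. pd f x i)" "Ck_on k U (\<lambda>x. pd g x i)" using Suc.prems i by simp_all
      show ?thesis using Ck_add[OF assms(1) Suc.IH[OF a(1) b(2)] Suc.IH[OF b(1) a(2)]] .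
    qed
  show ?case
    apply (rule Ck_SucI[where h = "\<lambda>i x. f x * pd g x i + pd f x i * g x"])
       apply (rule assms(1))
      apply (erule d)
     apply (erule c)
    by (rule conjunct2[OF *])
qed

lemma Ck_inverse:
  fixes g :: "'a::euclidean_space \<Rightarrow> real"
  assumes "open U" "Ck_on k U g" "\<And>x. x \<in> U \<Longrightarrow> g x \<noteq> 0"
  shows "Ck_on k U (\<lambda>x. inverse (g x))"
  using assms(2)
proof (induction k)
  case 0 then show ?case using assms(3) by (auto intro!: continuous_on_inverse)
next
  case (Suc k)
  have *: "(\<lambda>x. inverse (g x)) differentiable (at x) \<and>
      frechet_derivative (\<lambda>x. inverse (g x)) (at x) i = - (inverse (g x) * frechet_derivative g (at x) i * inverse (g x))" if "x \<in> U" for x i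
  proof -
    have D: "(g has_derivative frechet_derivative g (at x)) (at x)"
      using Suc.prems that by (auto intro: frechet_derivative_worksI)
    have "((\<lambda>x. inverse (g x)) has_derivative (\<lambda>h. - (inverse (g x) * frechet_derivative g (at x) h * inverse (g x)))) (at x)"
      using Deriv.has_derivative_inverse[OF assms(3)[OF that] D] .
    note H = this
    show ?thesis using differentiableI[OF H] frechet_derivative_at[OF H, symmetric] by simp
  qed
  have d: "\<And>x. x \<in> U \<Longrightarrow> (\<lambda>x. inverse (g x)) differentiable (at x)" by (rule conjunct1[OF *])
  have c: "Ck_on k U (\<lambda>x. - (inverse (g x) * pd g x i * inverse (g x)))" if i: "i \<in> Basis" for i
    proof -
      have a: "Ck_on k U (\<lambda>x. inverse (g x))" using Suc.IH Ck_mono Suc.prems by blast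
      have b: "Ck_on k U (\<lambda>x. pd g x i)" using Suc.prems i by simp
      have c: "Ck_on k U (\<lambda>x. inverse (g x) * pd g x i * inverse (g x))"
        using Ck_mult[OF assms(1) Ck_mult[OF assms(1) a b] a] .
      show ?thesis using Ck_lincomp[OF bounded_linear_minus[OF bounded_linear_ident] assms(1) c] .
    qed
  show ?case
    apply (rule Ck_SucI[where h = "\<lambda>i x. - (inverse (g x) * pd g x i * inverse (g x))"])
       apply (rule assms(1))
      apply (erule d)
     apply (erule c)
    by (rule conjunct2[OF *])
qed


definition sm :: "'a::euclidean_space set \<Rightarrow> ('a \<Rightarrow> 'b::euclidean_space) \<Rightarrow> bool" where
  "sm U f \<longleftrightarrow> (\<forall>k. Ck_on k U f)"

lemma sm_const: "sm U (\<lambda>x. c)"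
  unfolding sm_def using Ck_const by blast

lemma sm_id: "sm U (\<lambda>x. x)"
  unfolding sm_def using Ck_linear[OF bounded_linear_ident] by blast

lemma sm_fst: "open U \<Longrightarrow> sm U f \<Longrightarrow> sm U (\<lambda>x. fst (f x))"
  unfolding sm_def using Ck_lincomp[OF bounded_linear_fst] by blast

lemma sm_snd: "open U \<Longrightarrow> sm U f \<Longrightarrow> sm U (\<lambda>x. snd (f x))"
  unfolding sm_def using Ck_lincomp[OF bounded_linear_snd] by blast

lemma sm_pair: "open U \<Longrightarrow> sm U f \<Longrightarrow> sm U g \<Longrightarrow> sm U (\<lambda>x. (f x, g x))"
  unfolding sm_def using Ck_pair by blast

lemma sm_add: "open U \<Longrightarrow> sm U f \<Longrightarrow> sm U g \<Longrightarrow> sm U (\<lambda>x. f x + g x)"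
  unfolding sm_def using Ck_add by blast

lemma sm_minus: "open U \<Longrightarrow> sm U f \<Longrightarrow> sm U (\<lambda>x. - f x)"
  unfolding sm_def using Ck_lincomp[OF bounded_linear_minus[OF bounded_linear_ident]] by blast

lemma sm_diff: "open U \<Longrightarrow> sm U f \<Longrightarrow> sm U g \<Longrightarrow> sm U (\<lambda>x. f x - g x)"
proof -
  assume a: "open U" "sm U f" "sm U g"
  have "(\<lambda>x. f x - g x) = (\<lambda>x. f x + - g x)" by simp
  then show ?thesis using sm_add[OF a(1,2) sm_minus[OF a(1,3)]] by simp
qed

lemma sm_mult: fixes f g :: "'a::euclidean_space \<Rightarrow> real"
  shows "open U \<Longrightarrow> sm U f \<Longrightarrow> sm U g \<Longrightarrow> sm U (\<lambda>x. f x * g x)"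
  unfolding sm_def using Ck_mult by blast

lemma sm_power: fixes f :: "'a::euclidean_space \<Rightarrow> real"
  shows "open U \<Longrightarrow> sm U f \<Longrightarrow> sm U (\<lambda>x. f x ^ n)"
proof (induction n)
  case 0 then show ?case using sm_const[of U 1] by simp
next
  case (Suc n)
  then show ?case using sm_mult[OF Suc.prems(1) Suc.prems(2) Suc.IH[OF Suc.prems]] by simp
qed

lemma sm_divide: fixes f g :: "'a::euclidean_space \<Rightarrow> real"
  shows "open U \<Longrightarrow> sm U f \<Longrightarrow> sm U g \<Longrightarrow> (\<And>x. x \<in> U \<Longrightarrow> g x \<noteq> 0) \<Longrightarrow> sm U (\<lambda>x. f x / g x)"
  unfolding divide_inverse sm_def using Ck_mult Ck_inverse by metis

lemma sm_cong: "open U \<Longrightarrow> sm U f \<Longrightarrow> (\<And>x. x \<in> U \<Longrightarrow> f x = g x) \<Longrightarrow> sm U g"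
  unfolding sm_def by (metis Ck_cong)

lemma sm_smooth_on: "open U \<Longrightarrow> sm U f \<Longrightarrow> smooth_on U f"
  by (simp add: sm_def smooth_on_def)

lemma sm_cont: "sm U f \<Longrightarrow> continuous_on U f"
  unfolding sm_def by (metis Ck_on.simps(1))

lemmas sm_intros = sm_const sm_id sm_fst sm_snd sm_pair sm_add sm_minus sm_diff sm_mult sm_power



type_synonym R6 = "real \<times> real \<times> real \<times> real \<times> real \<times> real"

definition "cX1 = (\<lambda>v::R6. fst (snd (snd (snd v))))"
definition "cX2 = (\<lambda>v::R6. fst (snd (snd (snd (snd v)))))"
definition "cX3 = (\<lambda>v::R6. snd (snd (snd (snd (snd v)))) - fst (snd (snd v)))"
definition "cY1 = (\<lambda>v::R6. fst (snd v))"
definition "cY2 = (\<lambda>v::R6. fst (snd (snd v)))"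
definition "cY3 = (\<lambda>v::R6. fst (snd (snd (snd v))) - fst v)"
definition mk :: "real \<Rightarrow> real \<Rightarrow> real \<Rightarrow> real \<Rightarrow> real \<Rightarrow> real \<Rightarrow> R6" where
  "mk x1 x2 x3 y1 y2 y3 = (x1 - y3, y1, y2, x1, x2, x3 + y2)"

lemma mk_coords: "cX1 (mk a b c d e f) = a \<and> cX2 (mk a b c d e f) = b \<and> cX3 (mk a b c d e f) = c \<and>
  cY1 (mk a b c d e f) = d \<and> cY2 (mk a b c d e f) = e \<and> cY3 (mk a b c d e f) = f"
  by (simp add: mk_def cX1_def cX2_def cX3_def cY1_def cY2_def cY3_def)

lemma mk_coords_inv: "mk (cX1 v) (cX2 v) (cX3 v) (cY1 v) (cY2 v) (cY3 v) = v"
  by (simp add: mk_def cX1_def cX2_def cX3_def cY1_def cY2_def cY3_def)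

lemma sm_coords: "open U \<Longrightarrow> sm U cX1 \<and> sm U cX2 \<and> sm U cX3 \<and> sm U cY1 \<and> sm U cY2 \<and> sm U cY3"
  unfolding cX1_def cX2_def cX3_def cY1_def cY2_def cY3_def
  by (intro conjI sm_intros)

lemma sm_mk: "open U \<Longrightarrow> sm U f1 \<Longrightarrow> sm U f2 \<Longrightarrow> sm U f3 \<Longrightarrow> sm U f4 \<Longrightarrow> sm U f5 \<Longrightarrow> sm U f6 \<Longrightarrow>
  sm U (\<lambda>v. mk (f1 v) (f2 v) (f3 v) (f4 v) (f5 v) (f6 v))"
  unfolding mk_def by (intro sm_intros)

lemma lin_coords:
  "cX1 (x + y) = cX1 x + cX1 y \<and> cX2 (x + y) = cX2 x + cX2 y \<and> cX3 (x + y) = cX3 x + cX3 y \<and>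
   cY1 (x + y) = cY1 x + cY1 y \<and> cY2 (x + y) = cY2 x + cY2 y \<and> cY3 (x + y) = cY3 x + cY3 y"
  "cX1 (r *\<^sub>R x) = r * cX1 x \<and> cX2 (r *\<^sub>R x) = r * cX2 x \<and> cX3 (r *\<^sub>R x) = r * cX3 x \<and>
   cY1 (r *\<^sub>R x) = r * cY1 x \<and> cY2 (r *\<^sub>R x) = r * cY2 x \<and> cY3 (r *\<^sub>R x) = r * cY3 x"
  by (simp_all add: cX1_def cX2_def cX3_def cY1_def cY2_def cY3_def algebra_simps)

lemma A0_char: "v \<in> A0 \<longleftrightarrow>
  \<not> (cX1 v = 0 \<and> cX2 v = 0 \<and> cX3 v = 0 \<and> cY1 v = 0 \<and> cY2 v = 0 \<and> cY3 v = 0) \<and>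
  cX1 v * cY2 v = cX2 v * cY1 v \<and> cX1 v * cY3 v = cX3 v * cY1 v \<and> cX2 v * cY3 v = cX3 v * cY2 v"
proof -
  obtain a b c d e f where v: "v = (a, b, c, d, e, f)" by (cases v) auto
  have z: "v = 0 \<longleftrightarrow> (cX1 v = 0 \<and> cX2 v = 0 \<and> cX3 v = 0 \<and> cY1 v = 0 \<and> cY2 v = 0 \<and> cY3 v = 0)"
    by (auto simp: v zero_prod_def cX1_def cX2_def cX3_def cY1_def cY2_def cY3_def)
  have r1: "ricci11 a b c d e f = 0 \<longleftrightarrow> cX1 v * cY3 v = cX3 v * cY1 v"
    by (simp add: v ricci11_def cX1_def cX2_def cX3_def cY1_def cY2_def cY3_def algebra_simps; linarith)
  have r2: "ricci12 a b c d e f = 0 \<longleftrightarrow> cX1 v * cY2 v = cX2 v * cY1 v"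
    by (simp add: v ricci12_def cX1_def cX2_def cX3_def cY1_def cY2_def cY3_def algebra_simps; linarith)
  have r3: "ricci22 a b c d e f = 0 \<longleftrightarrow> cX2 v * cY3 v = cX3 v * cY2 v"
    by (simp add: v ricci22_def cX1_def cX2_def cX3_def cY1_def cY2_def cY3_def algebra_simps; linarith)
  have "v \<in> A0 \<longleftrightarrow> v \<noteq> 0 \<and> typeA_flat a b c d e f"
    by (simp add: A0_def v)
  then show ?thesis using z r1 r2 r3 typeA_flat_def by auto
qed


lemma open_neq0: "sm UNIV (g :: R6 \<Rightarrow> real) \<Longrightarrow> open {v. g v \<noteq> 0}"
  using open_Collect_neq[of g "\<lambda>x. 0"] sm_cont[of UNIV g] by auto

lemma chart_gen:
  fixes PA PB PC QA QB QC :: "R6 \<Rightarrow> real" and M :: "real \<Rightarrow> real \<Rightarrow> real \<Rightarrow> real \<Rightarrow> real \<Rightarrow> real \<Rightarrow> R6"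
  assumes PM: "\<And>a b c d e f. PA (M a b c d e f) = a \<and> PB (M a b c d e f) = b \<and> PC (M a b c d e f) = c \<and>
      QA (M a b c d e f) = d \<and> QB (M a b c d e f) = e \<and> QC (M a b c d e f) = f"
  and MPQ: "\<And>v. M (PA v) (PB v) (PC v) (QA v) (QB v) (QC v) = v"
  and smP: "\<And>U. open U \<Longrightarrow> sm U PA \<and> sm U PB \<and> sm U PC \<and> sm U QA \<and> sm U QB \<and> sm U QC"
  and smM: "\<And>(U::R6 set) f1 f2 f3 f4 f5 f6. open U \<Longrightarrow> sm U f1 \<Longrightarrow> sm U f2 \<Longrightarrow> sm U f3 \<Longrightarrow> sm U f4 \<Longrightarrow>
      sm U f5 \<Longrightarrow> sm U f6 \<Longrightarrow> sm U (\<lambda>v. M (f1 v) (f2 v) (f3 v) (f4 v) (f5 v) (f6 v))"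
  and linQa: "\<And>x y. QA (x + y) = QA x + QA y \<and> QB (x + y) = QB x + QB y \<and> QC (x + y) = QC x + QC y"
  and linQs: "\<And>r x. QA (r *\<^sub>R x) = r * QA x \<and> QB (r *\<^sub>R x) = r * QB x \<and> QC (r *\<^sub>R x) = r * QC x"
  and A0c: "\<And>v. v \<in> A0 \<longleftrightarrow>
      \<not> (PA v = 0 \<and> PB v = 0 \<and> PC v = 0 \<and> QA v = 0 \<and> QB v = 0 \<and> QC v = 0) \<and>
      PA v * QB v = PB v * QA v \<and> PA v * QC v = PC v * QA v \<and> PB v * QC v = PC v * QB v"
  and p: "p \<in> A0" "\<not> (PA p = 0 \<and> PB p = 0 \<and> PC p = 0)"
  shows "\<exists>U V (\<phi>::R6 \<Rightarrow> R6) L. open U \<and> p \<in> U \<and> open V \<and> \<phi> ` U = V \<and> inj_on \<phi> U \<and>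
        smooth_on U \<phi> \<and> smooth_on V (inv_into U \<phi>) \<and> subspace L \<and> \<phi> ` (U \<inter> A0) = V \<inter> L"
proof -
  define k1 where "k1 = PA p"
  define k2 where "k2 = PB p"
  define k3 where "k3 = PC p"
  define K where "K = k1 * k1 + k2 * k2 + k3 * k3"
  have K0: "K \<noteq> 0"
  proof
    assume "K = 0"
    then have "k1 * k1 = 0 \<and> k2 * k2 = 0 \<and> k3 * k3 = 0" unfolding K_def
      by (smt (verit) zero_le_square)
    then show False using p(2) by (simp add: k1_def k2_def k3_def)
  qed
  define kx where "kx = (\<lambda>v. k1 * PA v + k2 * PB v + k3 * PC v)"
  define ky where "ky = (\<lambda>v. k1 * QA v + k2 * QB v + k3 * QC v)"
  define U where "U = {v. kx v \<noteq> 0}"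
  define \<tau> where "\<tau> = (\<lambda>v. ky v / kx v)"
  define \<phi> where "\<phi> = (\<lambda>v. M (PA v) (PB v) (PC v) (QA v - \<tau> v * PA v + \<tau> v * (k1 / K))
      (QB v - \<tau> v * PB v + \<tau> v * (k2 / K)) (QC v - \<tau> v * PC v + \<tau> v * (k3 / K)))"
  define \<psi> where "\<psi> = (\<lambda>w. M (PA w) (PB w) (PC w) (QA w - ky w * (k1 / K) + ky w * PA w)
      (QB w - ky w * (k2 / K) + ky w * PB w) (QC w - ky w * (k3 / K) + ky w * PC w))"
  define L where "L = {w. QA w = ky w * (k1 / K) \<and> QB w = ky w * (k2 / K) \<and> QC w = ky w * (k3 / K)}"
  have smkx: "sm V kx" "sm V ky" if "open V" for V
    unfolding kx_def ky_def using smP[OF that] that by (auto intro!: sm_intros)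
  have opU: "open U" unfolding U_def by (rule open_neq0[OF smkx(1)[OF open_UNIV]])
  have pU: "p \<in> U" unfolding U_def kx_def using K0 by (simp add: K_def k1_def k2_def k3_def)
  have Pphi: "PA (\<phi> v) = PA v \<and> PB (\<phi> v) = PB v \<and> PC (\<phi> v) = PC v" for v
    by (simp add: \<phi>_def PM)
  have kxphi: "kx (\<phi> v) = kx v" for v using Pphi by (simp add: kx_def)
  have tau_kx: "\<tau> v * kx v = ky v" if "v \<in> U" for v
    using that by (simp add: U_def \<tau>_def)
  have kyphi: "ky (\<phi> v) = \<tau> v" if "v \<in> U" for v
  proof -
    have "ky (\<phi> v) = ky v - \<tau> v * kx v + \<tau> v * ((k1 * k1 + k2 * k2 + k3 * k3) / K)"
      by (simp add: ky_def kx_def \<phi>_def PM algebra_simps add_divide_distrib)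
    also have "\<dots> = \<tau> v" using tau_kx[OF that] K0 by (simp add: K_def[symmetric])
    finally show ?thesis .
  qed
  have psiphi: "\<psi> (\<phi> v) = v" if "v \<in> U" for v
  proof -
    have "\<psi> (\<phi> v) = M (PA v) (PB v) (PC v) (QA v) (QB v) (QC v)"
      unfolding \<psi>_def kyphi[OF that] by (simp add: \<phi>_def PM)
    then show ?thesis using MPQ by simp
  qed
  have Ppsi: "PA (\<psi> w) = PA w \<and> PB (\<psi> w) = PB w \<and> PC (\<psi> w) = PC w" for w
    by (simp add: \<psi>_def PM)
  have kxpsi: "kx (\<psi> w) = kx w" for w using Ppsi by (simp add: kx_def)
  have kypsi: "ky (\<psi> w) = ky w * kx w" for w
  proof -
    have "ky (\<psi> w) = ky w - ky w * ((k1 * k1 + k2 * k2 + k3 * k3) / K) + ky w * kx w"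
      by (simp add: ky_def kx_def \<psi>_def PM algebra_simps add_divide_distrib)
    also have "\<dots> = ky w * kx w" using K0 by (simp add: K_def[symmetric])
    finally show ?thesis .
  qed
  have taupsi: "\<tau> (\<psi> w) = ky w" if "w \<in> U" for w
    using that by (simp add: \<tau>_def kypsi kxpsi U_def)
  have phipsi: "\<phi> (\<psi> w) = w" if "w \<in> U" for w
  proof -
    have "\<phi> (\<psi> w) = M (PA w) (PB w) (PC w) (QA w) (QB w) (QC w)"
      unfolding \<phi>_def taupsi[OF that] by (simp add: \<psi>_def PM)
    then show ?thesis using MPQ by simp
  qed
  have phiU: "\<phi> ` U = U"
  proof
    show "\<phi> ` U \<subseteq> U" using kxphi by (auto simp: U_def)
    show "U \<subseteq> \<phi> ` U"
    proof
      fix w assume w: "w \<in> U"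
      have "\<psi> w \<in> U" using w kxpsi by (simp add: U_def)
      then show "w \<in> \<phi> ` U" using phipsi[OF w] by (metis image_eqI)
    qed
  qed
  have inj: "inj_on \<phi> U" by (metis inj_on_inverseI psiphi)
  have smphi: "smooth_on U \<phi>"
  proof (rule sm_smooth_on[OF opU])
    have tau: "sm U \<tau>" unfolding \<tau>_def
      by (rule sm_divide[OF opU smkx(2)[OF opU] smkx(1)[OF opU]]) (simp add: U_def)
    show "sm U \<phi>" unfolding \<phi>_def using smP[OF opU] opU tau
      by (intro smM sm_intros) auto
  qed
  have smpsi: "sm U \<psi>" unfolding \<psi>_def using smP[OF opU] opU smkx(2)[OF opU]
    by (intro smM sm_intros) auto
  have invpsi: "inv_into U \<phi> w = \<psi> w" if "w \<in> U" for w
  proof -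
    have "\<psi> w \<in> U" using that kxpsi by (simp add: U_def)
    then show ?thesis using inv_into_f_eq[OF inj _ phipsi[OF that]] by simp
  qed
  have sminv: "smooth_on U (inv_into U \<phi>)"
    by (rule sm_smooth_on[OF opU sm_cong[OF opU smpsi]]) (simp add: invpsi)
  have Q0: "QA 0 = 0 \<and> QB 0 = 0 \<and> QC 0 = 0" using linQs[of 0 0] by simp
  have kyadd: "ky (x + y) = ky x + ky y" for x y
    using linQa[of x y] by (simp add: ky_def algebra_simps)
  have kysc: "ky (r *\<^sub>R x) = r * ky x" for r x
    using linQs[of r x] by (simp add: ky_def algebra_simps)
  have subL: "subspace L"
    unfolding subspace_def
  proof (intro conjI ballI allI)
    show "0 \<in> L" using Q0 by (simp add: L_def ky_def)
  next
    fix x y assume "x \<in> L" "y \<in> L"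
    then show "x + y \<in> L" using linQa[of x y] by (simp add: L_def kyadd distrib_right add_divide_distrib)
  next
    fix c x assume "x \<in> L"
    then show "c *\<^sub>R x \<in> L" using linQs[of c x] by (simp add: L_def kysc)
  qed
  have img: "\<phi> ` (U \<inter> A0) = U \<inter> L"
  proof
    show "\<phi> ` (U \<inter> A0) \<subseteq> U \<inter> L"
    proof
      fix w assume "w \<in> \<phi> ` (U \<inter> A0)"
      then obtain v where v: "v \<in> U" "v \<in> A0" and w: "w = \<phi> v" by auto
      have par: "PA v * QB v = PB v * QA v" "PA v * QC v = PC v * QA v" "PB v * QC v = PC v * QB v"
        using v(2) A0c by auto
      have kx0: "kx v \<noteq> 0" using v(1) by (simp add: U_def)
      have E: "QA v * kx v = PA v * ky v" "QB v * kx v = PB v * ky v" "QC v * kx v = PC v * ky v"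
        unfolding kx_def ky_def using par by algebra+
      have Q: "QA v = \<tau> v * PA v" "QB v = \<tau> v * PB v" "QC v = \<tau> v * PC v"
        using E kx0 unfolding \<tau>_def by (auto simp: field_simps)
      have "QA w = \<tau> v * (k1 / K) \<and> QB w = \<tau> v * (k2 / K) \<and> QC w = \<tau> v * (k3 / K)"
        unfolding w by (simp add: \<phi>_def PM Q)
      then have "w \<in> L" unfolding L_def using kyphi[OF v(1)] w by simp
      moreover have "w \<in> U" using w v(1) kxphi by (simp add: U_def)
      ultimately show "w \<in> U \<inter> L" by simp
    qed
    show "U \<inter> L \<subseteq> \<phi> ` (U \<inter> A0)"
    proof
      fix w assume w: "w \<in> U \<inter> L"
      have pu: "\<psi> w \<in> U" using w kxpsi by (simp add: U_def)
      have Qw: "QA w = ky w * (k1 / K)" "QB w = ky w * (k2 / K)" "QC w = ky w * (k3 / K)"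
        using w by (auto simp: L_def)
      have Qpsi: "QA (\<psi> w) = ky w * PA w" "QB (\<psi> w) = ky w * PB w" "QC (\<psi> w) = ky w * PC w"
        by (simp_all add: \<psi>_def PM Qw)
      have nz: "\<not> (PA w = 0 \<and> PB w = 0 \<and> PC w = 0)" using w by (auto simp: U_def kx_def)
      have "\<psi> w \<in> A0" unfolding A0c Qpsi using Ppsi nz by auto
      then show "w \<in> \<phi> ` (U \<inter> A0)" using pu phipsi w by (metis IntI IntD1 image_eqI)
    qed
  qed
  show ?thesis
    using opU pU phiU inj smphi sminv subL img by blast
qed


context fixes X1 X2 X3 Y1 Y2 Y3 :: real
  assumes par: "X1*Y2 = X2*Y1" "X1*Y3 = X3*Y1" "X2*Y3 = X3*Y2"
begin
lemma A1: "(X1^2+X2^2+X3^2+Y1^2+Y2^2+Y3^2)^2 = (X1^2+X2^2+X3^2-Y1^2-Y2^2-Y3^2)^2 + (2*X1*Y1+2*X2*Y2+2*X3*Y3)^2"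
  using par by algebra
lemma A2: "(X1^2+X2^2+X3^2-Y1^2-Y2^2-Y3^2)*X3 + (2*X1*Y1+2*X2*Y2+2*X3*Y3)*Y3 = (X1^2+X2^2+X3^2+Y1^2+Y2^2+Y3^2)*X3"
  using par by algebra
lemma A3: "(2*X1*Y1+2*X2*Y2+2*X3*Y3)*X3 - (X1^2+X2^2+X3^2-Y1^2-Y2^2-Y3^2)*Y3 = (X1^2+X2^2+X3^2+Y1^2+Y2^2+Y3^2)*Y3"
  using par by algebra
lemma B1: "2*(X1^2+X2^2+X3^2+Y1^2+Y2^2+Y3^2)* X1 = (X1 - Y2)*((X1^2+X2^2+X3^2+Y1^2+Y2^2+Y3^2) + (X1^2+X2^2+X3^2-Y1^2-Y2^2-Y3^2)) + (Y1+X2)*(2*X1*Y1+2*X2*Y2+2*X3*Y3)"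
  using par by algebra
lemma B2: "2*(X1^2+X2^2+X3^2+Y1^2+Y2^2+Y3^2)* Y1 = (X1 - Y2)*(2*X1*Y1+2*X2*Y2+2*X3*Y3) + (Y1+X2)*((X1^2+X2^2+X3^2+Y1^2+Y2^2+Y3^2) - (X1^2+X2^2+X3^2-Y1^2-Y2^2-Y3^2))"
  using par by algebra
lemma B3: "2*(X1^2+X2^2+X3^2+Y1^2+Y2^2+Y3^2)* X2 = -(X1 - Y2)*(2*X1*Y1+2*X2*Y2+2*X3*Y3) + (Y1+X2)*((X1^2+X2^2+X3^2+Y1^2+Y2^2+Y3^2) + (X1^2+X2^2+X3^2-Y1^2-Y2^2-Y3^2))"
  using par by algebra
lemma B4: "2*(X1^2+X2^2+X3^2+Y1^2+Y2^2+Y3^2)* Y2 = -(X1 - Y2)*((X1^2+X2^2+X3^2+Y1^2+Y2^2+Y3^2) - (X1^2+X2^2+X3^2-Y1^2-Y2^2-Y3^2)) + (Y1+X2)*(2*X1*Y1+2*X2*Y2+2*X3*Y3)"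
  using par by algebra
lemma A4: "X3 = 0 \<Longrightarrow> Y3 = 0 \<Longrightarrow> X1 - Y2 = 0 \<Longrightarrow> Y1 + X2 = 0 \<Longrightarrow> X1 = 0 \<and> X2 = 0 \<and> Y1 = 0 \<and> Y2 = 0"
proof -
  assume h: "X3 = 0" "Y3 = 0" "X1 - Y2 = 0" "Y1 + X2 = 0"
  have "X1*X1 + X2*X2 = 0" using par(1) h by (simp add: algebra_simps) (metis add.commute add_eq_0_iff mult_minus_right)
  then have "X1 = 0 \<and> X2 = 0" by (metis sum_squares_eq_zero_iff)
  then show ?thesis using h by simp
qed
end

lemma Bdiv: fixes N x y E :: real
  shows "N \<noteq> 0 \<Longrightarrow> 2 * N * x = E \<Longrightarrow> y * (2 * N) = E \<Longrightarrow> y = x"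
  by (metis mult.commute mult_cancel_left mult_eq_0_iff zero_neq_numeral)

context fixes p q w1 w2 s t :: real
  assumes u: "p^2+q^2=1" and w: "p*w1+q*w2=w1" "q*w1-p*w2=w2"
begin
lemma C1': "((s*(1+p)+t*q)/2)^2 + ((-s*q+t*(1+p))/2)^2 + w1^2 + ((s*q+t*(1-p))/2)^2 + ((-s*(1-p)+t*q)/2)^2 + w2^2 = s^2+t^2+w1^2+w2^2"
proof -
  have "(s*(1+p)+t*q)^2 + (s*q+t*(1-p))^2 + (-s*q+t*(1+p))^2 + (-s*(1-p)+t*q)^2 = 4*(s^2+t^2)"
    using u by algebra
  then show ?thesis by (simp add: power_divide)
qed
lemma C2': "((s*(1+p)+t*q)/2)^2 + ((-s*q+t*(1+p))/2)^2 + w1^2 - ((s*q+t*(1-p))/2)^2 - ((-s*(1-p)+t*q)/2)^2 - w2^2 = p * (s^2+t^2+w1^2+w2^2)"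
proof -
  have "((s*(1+p)+t*q))^2 - ((s*q+t*(1-p)))^2 + ((-s*q+t*(1+p)))^2 - ((-s*(1-p)+t*q))^2 + 4*(w1^2 - w2^2) = 4* p * (s^2+t^2+w1^2+w2^2)"
    using u w by algebra
  then show ?thesis by (simp add: power_divide)
qed
lemma C3': "2*((s*(1+p)+t*q)/2)*((s*q+t*(1-p))/2) + 2*((-s*q+t*(1+p))/2)*((-s*(1-p)+t*q)/2) + 2*w1*w2 = q * (s^2+t^2+w1^2+w2^2)"
proof -
  have "2*(s*(1+p)+t*q)*(s*q+t*(1-p)) + 2*(-s*q+t*(1+p))*(-s*(1-p)+t*q) + 4*(2*w1*w2) = 4* q * (s^2+t^2+w1^2+w2^2)"
    using u w by algebra
  then show ?thesis by (simp add: field_simps)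
qed
lemma D1': "((s*(1+p)+t*q)/2) * ((-s*(1-p)+t*q)/2) = ((-s*q+t*(1+p))/2) * ((s*q+t*(1-p))/2)"
proof -
  have "(s*(1+p)+t*q)*(-s*(1-p)+t*q) = (-s*q+t*(1+p))*(s*q+t*(1-p))"
    using u by algebra
  then show ?thesis by (simp add: field_simps)
qed
lemma D2': "((s*(1+p)+t*q)/2) * w2 = w1 * ((s*q+t*(1-p))/2)"
proof -
  have "(s*(1+p)+t*q)*w2 = w1*(s*q+t*(1-p))"
    using u w by algebra
  then show ?thesis by (simp add: field_simps)
qed
lemma D3': "((-s*q+t*(1+p))/2) * w2 = w1 * ((-s*(1-p)+t*q)/2)"
proof -
  have "(-s*q+t*(1+p))*w2 = w1*(-s*(1-p)+t*q)"
    using u w by algebra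
  then show ?thesis by (simp add: field_simps)
qed
end

lemma E1: "(s*(1+p)+t*q)/2 - (-s*(1-p)+t*q)/2 = (s::real)"
  by (simp add: field_simps)
lemma E2: "(s*q+t*(1-p))/2 + (-s*q+t*(1+p))/2 = (t::real)"
  by (simp add: field_simps)

lemma mk_c: "cX1 (mk a b c d e f) = a" "cX2 (mk a b c d e f) = b" "cX3 (mk a b c d e f) = c"
  "cY1 (mk a b c d e f) = d" "cY2 (mk a b c d e f) = e" "cY3 (mk a b c d e f) = f"
  using mk_coords by simp_all

definition NN :: "R6 \<Rightarrow> real" where
  "NN v = cX1 v^2 + cX2 v^2 + cX3 v^2 + cY1 v^2 + cY2 v^2 + cY3 v^2"
definition UU1 :: "R6 \<Rightarrow> real" where
  "UU1 v = cX1 v^2 + cX2 v^2 + cX3 v^2 - cY1 v^2 - cY2 v^2 - cY3 v^2"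
definition UU2 :: "R6 \<Rightarrow> real" where
  "UU2 v = 2 * cX1 v * cY1 v + 2 * cX2 v * cY2 v + 2 * cX3 v * cY3 v"
definition FF :: "R6 \<Rightarrow> (real \<times> real) \<times> (real \<times> real) \<times> real \<times> real" where
  "FF v = ((UU1 v / NN v, UU2 v / NN v), (cX3 v, cY3 v), cX1 v - cY2 v, cY1 v + cX2 v)"
definition gg :: "real \<Rightarrow> real \<Rightarrow> real \<Rightarrow> real \<Rightarrow> real \<Rightarrow> real \<Rightarrow> R6" where
  "gg p q w1 w2 s t = mk ((s*(1+p)+t*q)/2) ((-s*q+t*(1+p))/2) w1 ((s*q+t*(1-p))/2) ((-s*(1-p)+t*q)/2) w2"
definition GG :: "(real \<times> real) \<times> (real \<times> real) \<times> real \<times> real \<Rightarrow> R6" where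
  "GG z = gg (fst (fst z)) (snd (fst z)) (fst (fst (snd z))) (snd (fst (snd z))) (fst (snd (snd z))) (snd (snd (snd z)))"

lemma L11_char: "((p, q), (w1, w2), s, t) \<in> L11_minus_zero \<longleftrightarrow>
  p^2 + q^2 = 1 \<and> p*w1 + q*w2 = w1 \<and> q*w1 - p*w2 = w2 \<and> \<not> (w1 = 0 \<and> w2 = 0 \<and> s = 0 \<and> t = 0)"
proof -
  have n: "norm (p, q) = 1 \<longleftrightarrow> p^2 + q^2 = 1" by (simp add: norm_Pair)
  show ?thesis unfolding L11_minus_zero_def mobius_bundle_def refl_u_def
    using n by (auto simp: zero_prod_def)
qed

lemma NN_pos: "v \<in> A0 \<Longrightarrow> NN v \<noteq> 0"
proof
  assume v: "v \<in> A0" and N: "NN v = 0"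
  have "cX1 v = 0 \<and> cX2 v = 0 \<and> cX3 v = 0 \<and> cY1 v = 0 \<and> cY2 v = 0 \<and> cY3 v = 0"
    using N unfolding NN_def
    by (smt (verit) zero_le_power2 power2_less_eq_zero_iff)
  then show False using v A0_char by blast
qed

lemma FF_into: "v \<in> A0 \<Longrightarrow> FF v \<in> L11_minus_zero"
proof -
  assume v: "v \<in> A0"
  have par: "cX1 v * cY2 v = cX2 v * cY1 v" "cX1 v * cY3 v = cX3 v * cY1 v" "cX2 v * cY3 v = cX3 v * cY2 v"
    and nz: "\<not> (cX1 v = 0 \<and> cX2 v = 0 \<and> cX3 v = 0 \<and> cY1 v = 0 \<and> cY2 v = 0 \<and> cY3 v = 0)"
    using v A0_char by auto
  have N0: "NN v \<noteq> 0" using NN_pos[OF v] .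
  have a1: "NN v ^ 2 = UU1 v ^ 2 + UU2 v ^ 2"
    unfolding NN_def UU1_def UU2_def by (rule A1[OF par])
  have a2: "UU1 v * cX3 v + UU2 v * cY3 v = NN v * cX3 v"
    unfolding NN_def UU1_def UU2_def by (rule A2[OF par])
  have a3: "UU2 v * cX3 v - UU1 v * cY3 v = NN v * cY3 v"
    unfolding NN_def UU1_def UU2_def by (rule A3[OF par])
  have e1: "(UU1 v / NN v)^2 + (UU2 v / NN v)^2 = 1"
  proof -
    have "(UU1 v / NN v)^2 + (UU2 v / NN v)^2 = (UU1 v ^ 2 + UU2 v ^ 2) / NN v ^ 2"
      by (simp add: power_divide add_divide_distrib)
    also have "\<dots> = 1" using N0 by (simp add: a1[symmetric])
    finally show ?thesis .
  qed
  have e2: "UU1 v / NN v * cX3 v + UU2 v / NN v * cY3 v = cX3 v"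
  proof -
    have "UU1 v / NN v * cX3 v + UU2 v / NN v * cY3 v = (UU1 v * cX3 v + UU2 v * cY3 v) / NN v"
      by (simp add: add_divide_distrib)
    then show ?thesis using a2 N0 by simp
  qed
  have e3: "UU2 v / NN v * cX3 v - UU1 v / NN v * cY3 v = cY3 v"
  proof -
    have "UU2 v / NN v * cX3 v - UU1 v / NN v * cY3 v = (UU2 v * cX3 v - UU1 v * cY3 v) / NN v"
      by (simp add: diff_divide_distrib)
    then show ?thesis using a3 N0 by simp
  qed
  have e4: "\<not> (cX3 v = 0 \<and> cY3 v = 0 \<and> cX1 v - cY2 v = 0 \<and> cY1 v + cX2 v = 0)"
    using A4[OF par] nz by blast
  show "FF v \<in> L11_minus_zero" unfolding FF_def by (intro L11_char[THEN iffD2] conjI e1 e2 e3 e4)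
qed

lemma GG_into: "z \<in> L11_minus_zero \<Longrightarrow> GG z \<in> A0"
proof -
  assume z: "z \<in> L11_minus_zero"
  obtain p q w1 w2 s t where zz: "z = ((p, q), (w1, w2), s, t)" by (metis prod.collapse)
  have h: "p^2 + q^2 = 1" "p*w1 + q*w2 = w1" "q*w1 - p*w2 = w2" "\<not> (w1 = 0 \<and> w2 = 0 \<and> s = 0 \<and> t = 0)"
    using z unfolding zz L11_char by auto
  have G: "GG z = gg p q w1 w2 s t" by (simp add: zz GG_def)
  show "GG z \<in> A0" unfolding G gg_def A0_char mk_c
    using D1'[OF h(1-3)] D2'[OF h(1-3)] D3'[OF h(1-3)] E1[of s p t q] E2[of s q t p] h(4)
    by auto
qed

lemma GF: "v \<in> A0 \<Longrightarrow> GG (FF v) = v"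
proof -
  assume v: "v \<in> A0"
  have par: "cX1 v * cY2 v = cX2 v * cY1 v" "cX1 v * cY3 v = cX3 v * cY1 v" "cX2 v * cY3 v = cX3 v * cY2 v"
    using v A0_char by auto
  have N0: "NN v \<noteq> 0" using NN_pos[OF v] .
  define s where "s = cX1 v - cY2 v"
  define t where "t = cY1 v + cX2 v"
  define p where "p = UU1 v / NN v"
  define q where "q = UU2 v / NN v"
  have b1: "2 * NN v * cX1 v = s * (NN v + UU1 v) + t * UU2 v"
    unfolding NN_def UU1_def UU2_def s_def t_def by (rule B1[OF par])
  have b2: "2 * NN v * cY1 v = s * UU2 v + t * (NN v - UU1 v)"
    unfolding NN_def UU1_def UU2_def s_def t_def by (rule B2[OF par])
  have b3: "2 * NN v * cX2 v = - s * UU2 v + t * (NN v + UU1 v)"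
    unfolding NN_def UU1_def UU2_def s_def t_def by (rule B3[OF par])
  have b4: "2 * NN v * cY2 v = - s * (NN v - UU1 v) + t * UU2 v"
    unfolding NN_def UU1_def UU2_def s_def t_def by (rule B4[OF par])
  have c1: "(s*(1+p)+t*q)/2 = cX1 v"
    by (rule Bdiv[OF N0 b1]) (use N0 in \<open>simp add: p_def q_def field_simps\<close>)
  have c2: "(-s*q+t*(1+p))/2 = cX2 v"
    by (rule Bdiv[OF N0 b3]) (use N0 in \<open>simp add: p_def q_def field_simps\<close>)
  have c3: "(s*q+t*(1-p))/2 = cY1 v"
    by (rule Bdiv[OF N0 b2]) (use N0 in \<open>simp add: p_def q_def field_simps\<close>)
  have c4: "(-s*(1-p)+t*q)/2 = cY2 v"
    by (rule Bdiv[OF N0 b4]) (use N0 in \<open>simp add: p_def q_def field_simps\<close>)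
  have "GG (FF v) = gg p q (cX3 v) (cY3 v) s t"
    by (simp add: GG_def FF_def p_def q_def s_def t_def)
  also have "\<dots> = mk (cX1 v) (cX2 v) (cX3 v) (cY1 v) (cY2 v) (cY3 v)"
    unfolding gg_def c1 c2 c3 c4 ..
  also have "\<dots> = v" by (rule mk_coords_inv)
  finally show ?thesis .
qed

lemma FG: "z \<in> L11_minus_zero \<Longrightarrow> FF (GG z) = z"
proof -
  assume z: "z \<in> L11_minus_zero"
  obtain p q w1 w2 s t where zz: "z = ((p, q), (w1, w2), s, t)" by (metis prod.collapse)
  have h: "p^2 + q^2 = 1" "p*w1 + q*w2 = w1" "q*w1 - p*w2 = w2" "\<not> (w1 = 0 \<and> w2 = 0 \<and> s = 0 \<and> t = 0)"
    using z unfolding zz L11_char by auto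
  have G: "GG z = gg p q w1 w2 s t" by (simp add: zz GG_def)
  define M where "M = s^2 + t^2 + w1^2 + w2^2"
  have M0: "M \<noteq> 0"
  proof
    assume "M = 0"
    then have "s = 0 \<and> t = 0 \<and> w1 = 0 \<and> w2 = 0" unfolding M_def
      by (smt (verit) zero_le_power2 power2_less_eq_zero_iff)
    then show False using h(4) by blast
  qed
  have n: "NN (GG z) = M" unfolding G gg_def NN_def mk_c M_def by (rule C1'[OF h(1-3)])
  have u1: "UU1 (GG z) = p * M" unfolding G gg_def UU1_def mk_c M_def by (rule C2'[OF h(1-3)])
  have u2: "UU2 (GG z) = q * M" unfolding G gg_def UU2_def mk_c M_def
    by (rule C3'[OF h(1-3)])
  have x3: "cX3 (GG z) = w1" "cY3 (GG z) = w2" unfolding G gg_def mk_c by simp_all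
  have st: "cX1 (GG z) - cY2 (GG z) = s" "cY1 (GG z) + cX2 (GG z) = t"
    unfolding G gg_def mk_c using E1[of s p t q] E2[of s q t p] by simp_all
  show "FF (GG z) = z" unfolding FF_def n u1 u2 x3 st using M0 zz by simp
qed

lemma sm_NN: "open U \<Longrightarrow> sm U NN \<and> sm U UU1 \<and> sm U UU2"
  unfolding NN_def UU1_def UU2_def using sm_coords[of U]
  by (intro conjI sm_intros) auto

lemma diffeo: "diffeomorphic_sets A0 L11_minus_zero"
  unfolding diffeomorphic_sets_def
proof (intro exI conjI)
  show "FF ` A0 \<subseteq> L11_minus_zero" using FF_into by blast
  show "GG ` L11_minus_zero \<subseteq> A0" using GG_into by blast
  show "\<forall>x\<in>A0. GG (FF x) = x" using GF by blast
  show "\<forall>y\<in>L11_minus_zero. FF (GG y) = y" using FG by blast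
  show "smooth_map_on A0 FF"
    unfolding smooth_map_on_def
  proof
    fix p assume p: "p \<in> A0"
    define U where "U = {v. NN v \<noteq> 0}"
    have opU: "open U" unfolding U_def by (rule open_neq0) (use sm_NN[OF open_UNIV] in blast)
    have "sm U FF" unfolding FF_def
      using sm_coords[OF opU] sm_NN[OF opU] opU
      by (intro sm_intros sm_divide) (auto simp: U_def)
    then show "\<exists>U g. open U \<and> p \<in> U \<and> smooth_on U g \<and> (\<forall>x\<in>A0 \<inter> U. g x = FF x)"
      using opU NN_pos[OF p] sm_smooth_on[OF opU] by (auto simp: U_def)
  qed
  show "smooth_map_on L11_minus_zero GG"
    unfolding smooth_map_on_def
  proof
    fix z assume "z \<in> L11_minus_zero"
    have "sm UNIV GG" unfolding GG_def gg_def
      by (intro sm_mk sm_intros sm_divide open_UNIV) auto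
    then show "\<exists>U g. open U \<and> z \<in> U \<and> smooth_on U g \<and> (\<forall>x\<in>L11_minus_zero \<inter> U. g x = GG x)"
      using sm_smooth_on[OF open_UNIV] by blast
  qed
qed


lemma submf: "smooth_submanifold A0"
  unfolding smooth_submanifold_def
proof
  fix p assume p: "p \<in> A0"
  show "\<exists>U V (\<phi>::R6 \<Rightarrow> R6) L. open U \<and> p \<in> U \<and> open V \<and> \<phi> ` U = V \<and> inj_on \<phi> U \<and>
        smooth_on U \<phi> \<and> smooth_on V (inv_into U \<phi>) \<and> subspace L \<and> \<phi> ` (U \<inter> A0) = V \<inter> L"
  proof (cases "cX1 p = 0 \<and> cX2 p = 0 \<and> cX3 p = 0")
    case False
    show ?thesis
      by (rule chart_gen[where PA=cX1 and PB=cX2 and PC=cX3 and QA=cY1 and QB=cY2 and QC=cY3 and M=mk, OF mk_coords mk_coords_inv sm_coords sm_mk _ _ A0_char p False])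
        (use lin_coords in auto)
  next
    case True
    have nz: "\<not> (cY1 p = 0 \<and> cY2 p = 0 \<and> cY3 p = 0)" using True p A0_char by auto
    show ?thesis
    proof (rule chart_gen[where PA=cY1 and PB=cY2 and PC=cY3 and QA=cX1 and QB=cX2 and QC=cX3 and M="\<lambda>a b c d e f. mk d e f a b c"])
      show "\<And>v. v \<in> A0 \<longleftrightarrow>
        \<not> (cY1 v = 0 \<and> cY2 v = 0 \<and> cY3 v = 0 \<and> cX1 v = 0 \<and> cX2 v = 0 \<and> cX3 v = 0) \<and>
        cY1 v * cX2 v = cY2 v * cX1 v \<and> cY1 v * cX3 v = cY3 v * cX1 v \<and> cY2 v * cX3 v = cY3 v * cX2 v"
        using A0_char by (auto simp: mult.commute)
    qed (use mk_coords mk_coords_inv sm_coords sm_mk lin_coords p nz in auto)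
  qed
qed

theorem theorem1p1:
  shows "A0 \<subseteq> - {0} \<and> smooth_submanifold A0 \<and> diffeomorphic_sets A0 L11_minus_zero"
proof (intro conjI)
  show "A0 \<subseteq> - {0}" by (auto simp: A0_def)
  show "smooth_submanifold A0" by (rule submf)
  show "diffeomorphic_sets A0 L11_minus_zero" by (rule diffeo)
qed


end
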